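(* Let $q$ be a prime power, let $X^2+\mu X+\lambda$ be a primitive polynomial of degree $2$ over $\mathbb F_q$, and let $x=\begin{pmatrix}0&1\\-\lambda&-\mu\end{pmatrix}\in GL_2(q)$, with image $\bar x\in PGL_2(q)$; set $C=\langle \bar x\rangle$ (a Singer cycle) and let $S\le PGL_2(q)$ be the image of the group of invertible upper triangular matrices $\begin{pmatrix}a&b\\0&c\end{pmatrix}$ ($a,c\in\mathbb F_q^*$, $b\in\mathbb F_q$). Consider the right action of $S$ on $C$ given by $s:c\mapsto c^{[s]}$, where $cs=s'c^{[s]}$ with $s'\in S$, $c^{[s]}\in C$. Let $u_1,\dots,u_q$ be the elements of the image $U\le S$ in $PGL_2(q)$ of the matrices $\begin{pmatrix}d&t\\0&d\end{pmatrix}$ ($d\in\mathbb F_q^*$, $t\in\mathbb F_q$). Then $\bar x^{[u_1]},\dots,\bar x^{[u_q]}$ are distinct. In particular the action of $S$ on $C\setminus\{1\}$ is transitive.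
   Context: $PGL_2(q)=CS$ with $C\cap S=1$, so every element $cs$ with $c\in C$, $s\in S$ can be uniquely written as $s'c'$ with $s'\in S$, $c'\in C$, and $c^{[s]}:=c'$ defines a right action of $S$ on $C$. *)

theory Defs
  imports "HOL-Algebra.Algebra" "HOL-Computational_Algebra.Polynomial"
begin

text \<open>2x2 matrices over a field: (a,b,c,d) stands for the matrix with rows (a b) and (c d).\<close>
type_synonym 'a mat2 = "'a \<times> 'a \<times> 'a \<times> 'a"

fun mmul :: "'a::field mat2 \<Rightarrow> 'a mat2 \<Rightarrow> 'a mat2" where
  "mmul (a1,b1,c1,d1) (a2,b2,c2,d2) = (a1 * a2 + b1 * c2, a1 * b2 + b1 * d2, c1 * a2 + d1 * c2, c1 * b2 + d1 * d2)"

fun det2 :: "'a::field mat2 \<Rightarrow> 'a" where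
  "det2 (a1,b1,c1,d1) = a1 * d1 - b1 * c1"

definition GL2 :: "('a::field) mat2 monoid" where
  "GL2 = \<lparr>carrier = {M. det2 M \<noteq> 0}, monoid.mult = mmul, monoid.one = (1,0,0,1)\<rparr>"

definition scalars :: "('a::field) mat2 set" where
  "scalars = {(k,0,0,k) | k. k \<noteq> 0}"

definition PGL2 :: "('a::field) mat2 set monoid" where
  "PGL2 = GL2 Mod scalars"

definition pgl_img :: "('a::field) mat2 \<Rightarrow> 'a mat2 set" where
  "pgl_img M = scalars #>\<^bsub>GL2\<^esub> M"

definition borel :: "('a::field) mat2 set set" where
  "borel = pgl_img ` {(a,b,0,c) | a b c. a \<noteq> 0 \<and> c \<noteq> 0}"

definition unip :: "('a::field) mat2 set set" where
  "unip = pgl_img ` {(d,t,0,d) | d t. d \<noteq> 0}"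

definition companion :: "'a::field \<Rightarrow> 'a \<Rightarrow> 'a mat2" where
  "companion lam mu = (0, 1, - lam, - mu)"

definition singer :: "'a::field \<Rightarrow> 'a \<Rightarrow> 'a mat2 set set" where
  "singer lam mu = {pgl_img (companion lam mu) [^]\<^bsub>PGL2\<^esub> (k::nat) | k. True}"

definition twisted_act :: "('a::field) mat2 set set \<Rightarrow> 'a mat2 set set \<Rightarrow> 'a mat2 set \<Rightarrow> 'a mat2 set \<Rightarrow> 'a mat2 set" where
  "twisted_act C S c s = (THE c'. c' \<in> C \<and> (\<exists>s'\<in>S. c \<otimes>\<^bsub>PGL2\<^esub> s = s' \<otimes>\<^bsub>PGL2\<^esub> c'))"

definition poly_order :: "'a::field poly \<Rightarrow> nat" where
  "poly_order f = (LEAST e. 0 < e \<and> f dvd (monom 1 e - 1))"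

text \<open>Primitive polynomial over F_q (Lidl--Niederreiter Thm 3.16 characterisation):
  monic, degree m \<ge> 1, f(0) \<noteq> 0, and order q^m - 1.\<close>
definition primitive_poly :: "'a::{finite,field} poly \<Rightarrow> bool" where
  "primitive_poly f \<longleftrightarrow> degree f \<ge> 1 \<and> lead_coeff f = 1 \<and> coeff f 0 \<noteq> 0
     \<and> poly_order f = card (UNIV :: 'a set) ^ degree f - 1"

end

theory Submission
  imports Defs
begin


lemma mmul_assoc: "mmul (mmul A B) C = mmul A (mmul B (C::'a::field mat2))"
  by (cases A, cases B, cases C) (simp add: algebra_simps)

lemma det2_mmul: "det2 (mmul A B) = det2 A * det2 (B::'a::field mat2)"
  by (cases A, cases B) (simp add: algebra_simps)

lemma GL2_simps [simp]: "carrier GL2 = {M. det2 M \<noteq> 0}" "monoid.mult GL2 = mmul" "one GL2 = (1,0,0,1)"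
  by (simp_all add: GL2_def)

definition minv :: "'a::field mat2 \<Rightarrow> 'a mat2" where
  "minv M = (case M of (a,b,c,d) \<Rightarrow> (d / det2 M, - b / det2 M, - c / det2 M, a / det2 M))"

lemma minv_l: assumes "det2 M \<noteq> 0" shows "mmul (minv M) M = (1,0,0,(1::'a::field))"
proof -
  obtain a b c d where M: "M = (a,b,c,d)" by (cases M) auto
  have e: "inverse (det2 M) * det2 M = 1" using assms by simp
  show ?thesis using e unfolding minv_def M
    by (simp add: divide_inverse algebra_simps)
qed

lemma minv_det: assumes d: "det2 M \<noteq> 0" shows "det2 (minv M) \<noteq> (0::'a::field)"
proof -
  have "det2 (mmul (minv M) M) = 1" by (simp add: minv_l[OF d])
  then have "det2 (minv M) * det2 M = 1" by (simp only: det2_mmul)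
  then show ?thesis by auto
qed

lemma group_GL2: "group (GL2 :: 'a::field mat2 monoid)"
proof (rule groupI)
  fix x assume x: "x \<in> carrier (GL2::'a mat2 monoid)"
  then show "\<exists>y\<in>carrier GL2. y \<otimes>\<^bsub>GL2\<^esub> x = \<one>\<^bsub>GL2\<^esub>"
    by (intro bexI[of _ "minv x"]) (auto simp: minv_l minv_det)
qed (auto simp: det2_mmul mmul_assoc)

lemma mmul_one: "mmul (1,0,0,1) M = M" "mmul M (1,0,0,1) = (M::'a::field mat2)"
  by (cases M, simp)+

lemma scal_comm: "mmul (k,0,0,k) M = mmul M (k,0,0,(k::'a::field))"
  by (cases M) (simp add: algebra_simps)

lemma subgroup_scalars: "subgroup scalars (GL2 :: 'a::field mat2 monoid)"
proof (rule group.subgroupI[OF group_GL2])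
  show "scalars \<subseteq> carrier (GL2::'a mat2 monoid)" by (auto simp: scalars_def)
  show "scalars \<noteq> {}" by (auto simp: scalars_def intro!: exI[of _ 1])
next
  fix a :: "'a mat2" assume "a \<in> scalars"
  then obtain k where a: "a = (k,0,0,k)" "k \<noteq> 0" by (auto simp: scalars_def)
  have "inv\<^bsub>GL2\<^esub> a = (1/k,0,0,1/k)"
    by (rule group.inv_equality[OF group_GL2]) (use a in auto)
  then show "inv\<^bsub>GL2\<^esub> a \<in> scalars" using a by (auto simp: scalars_def)
next
  fix a b :: "'a mat2" assume "a \<in> scalars" "b \<in> scalars"
  then show "a \<otimes>\<^bsub>GL2\<^esub> b \<in> scalars" by (auto simp: scalars_def)
qed

lemma normal_scalars: "scalars \<lhd> (GL2 :: 'a::field mat2 monoid)"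
proof -
  interpret group "GL2::'a mat2 monoid" by (rule group_GL2)
  show ?thesis
    by (rule normalI[OF subgroup_scalars])
       (auto simp: l_coset_def r_coset_def scalars_def scal_comm)
qed

lemma group_PGL2: "group (PGL2 :: 'a::field mat2 set monoid)"
  unfolding PGL2_def by (rule normal.factorgroup_is_group[OF normal_scalars])

lemma hom_pgl: "pgl_img \<in> hom GL2 (PGL2 :: 'a::field mat2 set monoid)"
  unfolding PGL2_def pgl_img_def[abs_def] by (rule normal.r_coset_hom_Mod[OF normal_scalars])

lemma pgl_mult: "det2 A \<noteq> 0 \<Longrightarrow> det2 B \<noteq> 0 \<Longrightarrow>
   pgl_img (mmul A B) = pgl_img A \<otimes>\<^bsub>PGL2\<^esub> pgl_img (B::'a::field mat2)"
  using hom_mult[OF hom_pgl, of A B] by simp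

lemma pgl_carrier: "det2 A \<noteq> 0 \<Longrightarrow> pgl_img (A::'a::field mat2) \<in> carrier PGL2"
  using hom_pgl by (auto simp: hom_def)

lemma pgl_one: "\<one>\<^bsub>PGL2\<^esub> = pgl_img (1,0,0,1::'a::field)"
proof -
  interpret group "GL2::'a mat2 monoid" by (rule group_GL2)
  show ?thesis unfolding PGL2_def pgl_img_def
    using subgroup.rcos_const[OF subgroup_scalars, of "(1,0,0,1)"]
    by (auto simp: scalars_def)
qed

lemma pgl_eqD: "pgl_img A = pgl_img B \<Longrightarrow> det2 A \<noteq> 0 \<Longrightarrow> \<exists>k. k \<noteq> 0 \<and> A = mmul (k,0,0,k) (B::'a::field mat2)"
proof -
  assume e: "pgl_img A = pgl_img B" and d: "det2 A \<noteq> 0"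
  interpret group "GL2::'a mat2 monoid" by (rule group_GL2)
  have "A \<in> pgl_img A" unfolding pgl_img_def
    by (rule rcos_self) (use d subgroup_scalars in auto)
  then have "A \<in> scalars #>\<^bsub>GL2\<^esub> B" using e by (simp add: pgl_img_def)
  then show ?thesis by (auto simp: r_coset_def scalars_def)
qed

lemma pgl_scal: "k \<noteq> 0 \<Longrightarrow> det2 B \<noteq> 0 \<Longrightarrow> pgl_img (mmul (k,0,0,k) B) = pgl_img (B::'a::field mat2)"
proof -
  assume k: "k \<noteq> 0" and B: "det2 B \<noteq> 0"
  interpret group "GL2::'a mat2 monoid" by (rule group_GL2)
  interpret P: group "PGL2::'a mat2 set monoid" by (rule group_PGL2)
  have "pgl_img (k,0,0,k) = \<one>\<^bsub>PGL2\<^esub>"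
    unfolding PGL2_def pgl_img_def using subgroup.rcos_const[OF subgroup_scalars, of "(k,0,0,k)"] k
    by (auto simp: scalars_def)
  then show ?thesis using pgl_mult[of "(k,0,0,k)" B] k B pgl_carrier[OF B] by simp
qed



definition phi :: "'a::field \<Rightarrow> 'a \<Rightarrow> 'a \<Rightarrow> 'a \<Rightarrow> 'a mat2" where
  "phi lam mu a b = (a, b, - b * lam, a - b * mu)"

lemma det_comp: "det2 (companion lam mu) = lam"
  by (simp add: companion_def)

lemma mod_step:
  fixes r :: "'a::field poly"
  assumes "degree r \<le> 1"
  shows "(r * [:0,1:]) mod [:lam,mu,1:] = [:- coeff r 1 * lam, coeff r 0 - coeff r 1 * mu:]"
proof -
  have r: "r = [:coeff r 0, coeff r 1:]"
    by (rule poly_eqI) (use assms in \<open>auto simp: coeff_pCons coeff_eq_0 split: nat.splits\<close>)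
  have "r * [:0,1:] = [:- coeff r 1 * lam, coeff r 0 - coeff r 1 * mu:] + [:coeff r 1:] * [:lam,mu,1:]"
    by (subst r) (simp add: algebra_simps)
  then have "(r * [:0,1:]) mod [:lam,mu,1:] = [:- coeff r 1 * lam, coeff r 0 - coeff r 1 * mu:] mod [:lam,mu,1:]"
    by (simp only: mod_mult_self1)
  also have "\<dots> = [:- coeff r 1 * lam, coeff r 0 - coeff r 1 * mu:]"
    by (rule mod_poly_less) auto
  finally show ?thesis .
qed

lemma monom_Suc1: "monom (1::'a::field) (Suc e) = monom 1 e * [:0,1:]"
  by (simp add: monom_altdef power_Suc2)

lemma pow_eq:
  fixes lam mu :: "'a::field"
  shows "companion lam mu [^]\<^bsub>GL2\<^esub> e =
    phi lam mu (coeff (monom 1 e mod [:lam,mu,1:]) 0) (coeff (monom 1 e mod [:lam,mu,1:]) 1)"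
proof (induction e)
  case 0
  have "monom (1::'a) 0 = 1" by (simp add: one_pCons)
  then have "monom (1::'a) 0 mod [:lam,mu,1:] = 1" by (simp add: mod_poly_less)
  then show ?case by (simp add: phi_def one_pCons)
next
  case (Suc e)
  let ?r = "monom 1 e mod [:lam,mu,1:]"
  have d: "degree ?r \<le> 1"
    using degree_mod_less[of "[:lam,mu,1:]" "monom 1 e"] by auto
  have "monom (1::'a) (Suc e) mod [:lam,mu,1:] = (?r * [:0,1:]) mod [:lam,mu,1:]"
    unfolding monom_Suc1 by (rule mod_mult_left_eq[symmetric])
  also have "\<dots> = [:- coeff ?r 1 * lam, coeff ?r 0 - coeff ?r 1 * mu:]" by (rule mod_step[OF d])
  finally have m: "monom (1::'a) (Suc e) mod [:lam,mu,1:] = [:- coeff ?r 1 * lam, coeff ?r 0 - coeff ?r 1 * mu:]" .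
  show ?case unfolding nat_pow_Suc Suc m
    by (simp add: phi_def companion_def algebra_simps)
qed



lemma card_pairs: "card (UNIV :: ('a::finite \<times> 'a) set) = card (UNIV::'a set) * card (UNIV::'a set)"
  by (simp flip: UNIV_Times_UNIV add: card_cartesian_product)

locale prim =
  fixes lam mu :: "'a::{finite,field}"
  assumes prim: "primitive_poly [:lam, mu, 1:]"
begin

abbreviation "x \<equiv> companion lam mu"
abbreviation "f \<equiv> [:lam, mu, 1:]"

lemma lam_nz: "lam \<noteq> 0" using prim by (simp add: primitive_poly_def)

lemma x_carr: "x \<in> carrier GL2" using lam_nz by (simp add: det_comp)

lemma pord: "poly_order f = (card (UNIV::'a set) * card (UNIV::'a set) - 1)"
  using prim by (simp add: primitive_poly_def power2_eq_square)

lemma pow_one_ge: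
  assumes e: "0 < e" and one: "x [^]\<^bsub>GL2\<^esub> e = (1,0,0,1)"
  shows "(card (UNIV::'a set) * card (UNIV::'a set) - 1) \<le> e"
proof -
  let ?r = "monom 1 e mod f"
  have d: "degree ?r \<le> 1"
    using degree_mod_less[of f "monom 1 e"] by auto
  have c: "coeff ?r 0 = 1" "coeff ?r 1 = 0" using one unfolding pow_eq by (auto simp: phi_def)
  have r: "?r = 1"
  proof (rule poly_eqI)
    fix n show "coeff ?r n = coeff 1 n"
    proof (cases "n \<le> 1")
      case True then have "n = 0 \<or> n = 1" by auto
      then show ?thesis using c by (auto simp: coeff_1)
    next
      case False then show ?thesis using d by (auto simp: coeff_1 coeff_eq_0)
    qed
  qed
  have "(1::'a poly) mod f = 1" by (simp add: mod_poly_less)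
  then have "f dvd monom 1 e - 1" using r by (metis mod_eq_dvd_iff)
  then have "poly_order f \<le> e" unfolding poly_order_def using e by (intro Least_le) auto
  then show ?thesis using pord by simp
qed

lemma pow_in: "x [^]\<^bsub>GL2\<^esub> (k::nat) \<in> (\<lambda>(a,b). phi lam mu a b) ` (UNIV - {(0,0)})"
proof -
  interpret group "GL2::'a mat2 monoid" by (rule group_GL2)
  have "det2 (x [^]\<^bsub>GL2\<^esub> k) \<noteq> 0" using nat_pow_closed[OF x_carr, of k] by simp
  then show ?thesis unfolding pow_eq
    by (intro image_eqI[of _ _ "(coeff (monom 1 k mod f) 0, coeff (monom 1 k mod f) 1)"]) (auto simp: phi_def)
qed

lemma pow_inj: "inj_on (\<lambda>k. x [^]\<^bsub>GL2\<^esub> (k::nat)) {..<(card (UNIV::'a set) * card (UNIV::'a set) - 1)}"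
proof -
  interpret group "GL2::'a mat2 monoid" by (rule group_GL2)
  have *: False if ij: "i < j" "j < (card (UNIV::'a set) * card (UNIV::'a set) - 1)" and eq: "x [^]\<^bsub>GL2\<^esub> i = x [^]\<^bsub>GL2\<^esub> j" for i j
  proof -
    have "x [^]\<^bsub>GL2\<^esub> i \<otimes>\<^bsub>GL2\<^esub> x [^]\<^bsub>GL2\<^esub> (j - i) = x [^]\<^bsub>GL2\<^esub> j"
      using nat_pow_mult[OF x_carr, of i "j-i"] ij by (simp del: GL2_simps)
    also have "\<dots> = x [^]\<^bsub>GL2\<^esub> i \<otimes>\<^bsub>GL2\<^esub> \<one>\<^bsub>GL2\<^esub>"
      using eq nat_pow_closed[OF x_carr, of i] by (simp del: GL2_simps)
    finally have "x [^]\<^bsub>GL2\<^esub> i \<otimes>\<^bsub>GL2\<^esub> x [^]\<^bsub>GL2\<^esub> (j - i) = x [^]\<^bsub>GL2\<^esub> i \<otimes>\<^bsub>GL2\<^esub> \<one>\<^bsub>GL2\<^esub>" .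
    then have "x [^]\<^bsub>GL2\<^esub> (j - i) = \<one>\<^bsub>GL2\<^esub>" using x_carr by (simp del: GL2_simps)
    then have "(card (UNIV::'a set) * card (UNIV::'a set) - 1) \<le> j - i" using ij by (intro pow_one_ge) auto
    then show False using ij by simp
  qed
  show ?thesis unfolding inj_on_def by (metis * linorder_neqE_nat lessThan_iff)
qed

lemma pow_surj:
  assumes "(a, b) \<noteq> (0, 0)"
  shows "\<exists>k. x [^]\<^bsub>GL2\<^esub> (k::nat) = phi lam mu a b"
proof -
  let ?B = "(\<lambda>(a,b). phi lam mu a b) ` (UNIV - {(0,0)})"
  let ?A = "(\<lambda>k. x [^]\<^bsub>GL2\<^esub> (k::nat)) ` {..<(card (UNIV::'a set) * card (UNIV::'a set) - 1)}"
  have sub: "?A \<subseteq> ?B" using pow_in by auto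
  have cA: "card ?A = (card (UNIV::'a set) * card (UNIV::'a set) - 1)" using card_image[OF pow_inj] by simp
  have "card ?B \<le> card (UNIV - {(0::'a,0::'a)})" by (rule card_image_le) simp
  also have "\<dots> = (card (UNIV::'a set) * card (UNIV::'a set) - 1)" by (simp add: card_Diff_singleton card_pairs)
  finally have "?A = ?B" using sub cA by (intro card_seteq) auto
  then show ?thesis using assms by (metis (no_types, lifting) DiffI UNIV_I case_prod_conv imageE image_eqI singletonD)
qed

end


definition UT :: "'a::field mat2 set" where
  "UT = {(a,b,0,c) | a b c. a \<noteq> 0 \<and> c \<noteq> 0}"

lemma borel_UT: "borel = pgl_img ` UT"
  by (simp add: borel_def UT_def)

lemma UT_det: "M \<in> UT \<Longrightarrow> det2 M \<noteq> 0" by (auto simp: UT_def)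

lemma UT_I: "det2 M \<noteq> 0 \<Longrightarrow> (case M of (a,b,c,d) \<Rightarrow> c) = 0 \<Longrightarrow> M \<in> UT"
  by (cases M) (auto simp: UT_def)

lemma subgroup_UT: "subgroup UT (GL2 :: 'a::field mat2 monoid)"
proof (rule group.subgroupI[OF group_GL2])
  show "UT \<subseteq> carrier (GL2::'a mat2 monoid)" by (auto simp: UT_def)
  have "(1,0,0,1::'a) \<in> UT" by (simp add: UT_def)
  then show "(UT::'a mat2 set) \<noteq> {}" by auto
next
  fix M :: "'a mat2" assume M: "M \<in> UT"
  interpret group "GL2::'a mat2 monoid" by (rule group_GL2)
  have d: "det2 M \<noteq> 0" using M by (auto simp: UT_def)
  have "inv\<^bsub>GL2\<^esub> M = minv M"
    by (rule inv_equality) (use d minv_l[OF d] minv_det[OF d] in \<open>simp_all del: det2.simps\<close>)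
  then show "inv\<^bsub>GL2\<^esub> M \<in> UT" using M d minv_det[OF d]
    by (auto simp: UT_def minv_def intro!: UT_I)
next
  fix M M' :: "'a mat2" assume "M \<in> UT" "M' \<in> UT"
  then show "M \<otimes>\<^bsub>GL2\<^esub> M' \<in> UT" by (auto simp: UT_def)
qed

lemma group_hom_pgl: "group_hom (GL2 :: 'a::field mat2 monoid) PGL2 pgl_img"
  by (simp add: group_hom_def group_hom_axioms_def group_GL2 group_PGL2 hom_pgl)

lemma subgroup_borel: "subgroup borel (PGL2 :: 'a::field mat2 set monoid)"
  unfolding borel_UT by (rule group_hom.subgroup_img_is_subgroup[OF group_hom_pgl subgroup_UT])

lemma pgl_pow: "det2 A \<noteq> 0 \<Longrightarrow> pgl_img A [^]\<^bsub>PGL2\<^esub> (k::nat) = pgl_img (A [^]\<^bsub>GL2\<^esub> k)"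
  using group_hom.hom_nat_pow[OF group_hom_pgl, of A k] by simp

lemma bruhat:
  fixes G H :: "'a::field mat2"
  assumes G: "det2 G \<noteq> 0" "(case G of (a,b,c,d) \<Rightarrow> c) \<noteq> 0"
      and H: "det2 H \<noteq> 0" "(case H of (a,b,c,d) \<Rightarrow> c) \<noteq> 0"
  shows "\<exists>A\<in>UT. \<exists>B\<in>UT. mmul G B = mmul A H"
proof -
  obtain g1 g2 g3 g4 where g: "G = (g1,g2,g3,g4)" by (cases G) auto
  obtain h1 h2 h3 h4 where h: "H = (h1,h2,h3,h4)" by (cases H) auto
  have g3: "g3 \<noteq> 0" and h3: "h3 \<noteq> 0" and dh: "h1*h4 - h2*h3 \<noteq> 0" using G H g h by auto
  define be where "be = (g3*h4 - g4*h3) / (g3*h3)"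
  define B :: "'a mat2" where "B = (1, be, 0, 1)"
  define A where "A = mmul (mmul G B) (minv H)"
  have AH: "mmul A H = mmul G B" unfolding A_def mmul_assoc minv_l[OF H(1)] mmul_one ..
  have dB: "det2 B \<noteq> 0" by (simp add: B_def)
  have dA: "det2 A \<noteq> 0" unfolding A_def det2_mmul using G(1) dB minv_det[OF H(1)] by simp
  have "(case A of (a,b,c,d) \<Rightarrow> c) = 0"
    unfolding A_def B_def g h minv_def be_def using g3 h3 dh
    by (simp add: field_simps)
  then have "A \<in> UT" using dA by (rule UT_I[rotated])
  moreover have "B \<in> UT" by (simp add: B_def UT_def)
  ultimately show ?thesis using AH by metis
qed



lemma pgl_scalar_one: "a \<noteq> 0 \<Longrightarrow> pgl_img (a,0,0,a::'a::field) = \<one>\<^bsub>PGL2\<^esub>"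
  using pgl_scal[of a "(1,0,0,1)"] by (simp add: pgl_one)

context prim
begin

abbreviation "Xb \<equiv> pgl_img x"

lemma X_carr: "Xb \<in> carrier PGL2" using pgl_carrier x_carr by simp

lemma X_pow: "Xb [^]\<^bsub>PGL2\<^esub> (k::nat) = pgl_img (x [^]\<^bsub>GL2\<^esub> k)"
  using pgl_pow x_carr by simp

lemma xpow_det: "det2 (x [^]\<^bsub>GL2\<^esub> (k::nat)) \<noteq> 0"
  using monoid.nat_pow_closed[OF group.is_monoid[OF group_GL2] x_carr, of k] by simp

lemma F1:
  assumes "Xb [^]\<^bsub>PGL2\<^esub> (k::nat) \<in> borel"
  shows "Xb [^]\<^bsub>PGL2\<^esub> k = \<one>\<^bsub>PGL2\<^esub>"
proof -
  obtain a b where ab: "x [^]\<^bsub>GL2\<^esub> k = phi lam mu a b" "(a,b) \<noteq> (0,0)"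
    using pow_in[of k] by auto
  obtain M where M: "M \<in> UT" "pgl_img (x [^]\<^bsub>GL2\<^esub> k) = pgl_img M"
    using assms unfolding X_pow borel_UT by auto
  obtain kk where kk: "kk \<noteq> 0" "x [^]\<^bsub>GL2\<^esub> k = mmul (kk,0,0,kk) M"
    using pgl_eqD[OF M(2) xpow_det] by auto
  obtain m1 m2 m4 where m: "M = (m1,m2,0,m4)" using M(1) by (auto simp: UT_def)
  have eq: "phi lam mu a b = mmul (kk,0,0,kk) (m1,m2,0,m4)" using kk(2) ab(1) m by simp
  have "fst (snd (snd (phi lam mu a b))) = fst (snd (snd (mmul (kk,0,0,kk) (m1,m2,0,m4))))"
    using eq by (simp only:)
  then have "- b * lam = 0" by (simp add: phi_def)
  then have b: "b = 0" using lam_nz by simp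
  then have a: "a \<noteq> 0" using ab by simp
  have "x [^]\<^bsub>GL2\<^esub> k = (a,0,0,a)" using ab b by (simp add: phi_def)
  then show ?thesis unfolding X_pow using pgl_scalar_one[OF a] by simp
qed

lemma uniq_aux:
  assumes ij: "i \<le> j" and s: "s1 \<in> borel" "s2 \<in> borel"
    and e: "s1 \<otimes>\<^bsub>PGL2\<^esub> Xb [^]\<^bsub>PGL2\<^esub> (i::nat) = s2 \<otimes>\<^bsub>PGL2\<^esub> Xb [^]\<^bsub>PGL2\<^esub> (j::nat)"
  shows "Xb [^]\<^bsub>PGL2\<^esub> i = Xb [^]\<^bsub>PGL2\<^esub> j"
proof -
  interpret P: group "PGL2 :: 'a mat2 set monoid" by (rule group_PGL2)
  have sc: "s1 \<in> carrier PGL2" "s2 \<in> carrier PGL2"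
    using s subgroup.subset[OF subgroup_borel] by auto
  have Xc: "Xb [^]\<^bsub>PGL2\<^esub> (n::nat) \<in> carrier PGL2" for n using X_carr by simp
  have j: "Xb [^]\<^bsub>PGL2\<^esub> j = Xb [^]\<^bsub>PGL2\<^esub> (j-i) \<otimes>\<^bsub>PGL2\<^esub> Xb [^]\<^bsub>PGL2\<^esub> i"
    using P.nat_pow_mult[OF X_carr, of "j-i" i] ij by simp
  have "s1 \<otimes>\<^bsub>PGL2\<^esub> Xb [^]\<^bsub>PGL2\<^esub> i = (s2 \<otimes>\<^bsub>PGL2\<^esub> Xb [^]\<^bsub>PGL2\<^esub> (j-i)) \<otimes>\<^bsub>PGL2\<^esub> Xb [^]\<^bsub>PGL2\<^esub> i"
    using e j sc Xc by (simp add: P.m_assoc)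
  then have "s1 = s2 \<otimes>\<^bsub>PGL2\<^esub> Xb [^]\<^bsub>PGL2\<^esub> (j-i)" using sc Xc by simp
  then have "Xb [^]\<^bsub>PGL2\<^esub> (j-i) = inv\<^bsub>PGL2\<^esub> s2 \<otimes>\<^bsub>PGL2\<^esub> s1"
    using sc Xc by (simp add: P.inv_solve_left)
  also have "\<dots> \<in> borel" by (intro subgroup.m_closed[OF subgroup_borel] subgroup.m_inv_closed[OF subgroup_borel] s)
  finally have "Xb [^]\<^bsub>PGL2\<^esub> (j-i) = \<one>\<^bsub>PGL2\<^esub>" by (rule F1)
  then show ?thesis using j Xc by simp
qed

lemma uniq:
  assumes c: "c1 \<in> singer lam mu" "c2 \<in> singer lam mu" and s: "s1 \<in> borel" "s2 \<in> borel"
    and e: "s1 \<otimes>\<^bsub>PGL2\<^esub> c1 = s2 \<otimes>\<^bsub>PGL2\<^esub> c2"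
  shows "c1 = c2"
proof -
  obtain i j where ij: "c1 = Xb [^]\<^bsub>PGL2\<^esub> (i::nat)" "c2 = Xb [^]\<^bsub>PGL2\<^esub> (j::nat)"
    using c by (auto simp: singer_def)
  show ?thesis
  proof (cases "i \<le> j")
    case True then show ?thesis using uniq_aux[OF True s] e ij by simp
  next
    case False then show ?thesis using uniq_aux[of j i s2 s1] s e ij by simp
  qed
qed

lemma twisted_eq:
  assumes "c' \<in> singer lam mu" "s' \<in> borel" "c \<otimes>\<^bsub>PGL2\<^esub> s = s' \<otimes>\<^bsub>PGL2\<^esub> c'"
  shows "twisted_act (singer lam mu) borel c s = c'"
  unfolding twisted_act_def
proof (rule the_equality)
  show "c' \<in> singer lam mu \<and> (\<exists>s'\<in>borel. c \<otimes>\<^bsub>PGL2\<^esub> s = s' \<otimes>\<^bsub>PGL2\<^esub> c')" using assms by auto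
next
  fix c'' assume "c'' \<in> singer lam mu \<and> (\<exists>s'\<in>borel. c \<otimes>\<^bsub>PGL2\<^esub> s = s' \<otimes>\<^bsub>PGL2\<^esub> c'')"
  then obtain s'' where "c'' \<in> singer lam mu" "s'' \<in> borel" "c \<otimes>\<^bsub>PGL2\<^esub> s = s'' \<otimes>\<^bsub>PGL2\<^esub> c''" by auto
  then show "c'' = c'" using uniq[of c'' c' s'' s'] assms by simp
qed

end


context prim
begin

definition "Ut t = (1, t, 0, 1::'a)"

lemma Ut_det: "det2 (Ut t) \<noteq> 0" by (simp add: Ut_def)

lemma exist: "\<exists>k::nat. \<exists>s'\<in>borel. Xb \<otimes>\<^bsub>PGL2\<^esub> pgl_img (Ut t) = s' \<otimes>\<^bsub>PGL2\<^esub> Xb [^]\<^bsub>PGL2\<^esub> k"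
proof -
  interpret P: group "PGL2 :: 'a mat2 set monoid" by (rule group_PGL2)
  obtain k where k: "x [^]\<^bsub>GL2\<^esub> (k::nat) = phi lam mu (- t * lam) 1"
    using pow_surj[of "- t * lam" 1] by auto
  define y where "y = phi lam mu (- t * lam) 1"
  define xi :: "'a mat2" where "xi = (- mu / lam, - 1 / lam, 1, 0)"
  define N where "N = mmul (mmul y (Ut (- t))) xi"
  have dy: "det2 y \<noteq> 0" using xpow_det[of k] k by (simp add: y_def)
  have dxi: "det2 xi \<noteq> 0" using lam_nz by (simp add: xi_def)
  have dN: "det2 N \<noteq> 0" unfolding N_def det2_mmul using dy dxi Ut_det by simp
  have "(case N of (a,b,c,d) \<Rightarrow> c) = 0"
    unfolding N_def y_def xi_def Ut_def phi_def using lam_nz by (simp add: field_simps)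
  then have NUT: "N \<in> UT" using dN by (rule UT_I[rotated])
  have NxU: "mmul (mmul N x) (Ut t) = y"
    unfolding N_def y_def xi_def Ut_def phi_def companion_def using lam_nz by (simp add: field_simps)
  have "pgl_img N \<otimes>\<^bsub>PGL2\<^esub> (Xb \<otimes>\<^bsub>PGL2\<^esub> pgl_img (Ut t)) = pgl_img y"
  proof -
    have dxU: "det2 (mmul x (Ut t)) \<noteq> 0" using x_carr Ut_det[of t] by (simp add: det2_mmul del: det2.simps)
    have "Xb \<otimes>\<^bsub>PGL2\<^esub> pgl_img (Ut t) = pgl_img (mmul x (Ut t))"
      using pgl_mult[of x "Ut t"] x_carr Ut_det[of t] by simp
    then have "pgl_img N \<otimes>\<^bsub>PGL2\<^esub> (Xb \<otimes>\<^bsub>PGL2\<^esub> pgl_img (Ut t)) = pgl_img (mmul N (mmul x (Ut t)))"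
      using pgl_mult[OF dN dxU] by simp
    also have "\<dots> = pgl_img y" using NxU by (simp add: mmul_assoc)
    finally show ?thesis .
  qed
  also have "\<dots> = Xb [^]\<^bsub>PGL2\<^esub> k" using k by (simp add: X_pow y_def)
  finally have "Xb \<otimes>\<^bsub>PGL2\<^esub> pgl_img (Ut t) = inv\<^bsub>PGL2\<^esub> pgl_img N \<otimes>\<^bsub>PGL2\<^esub> Xb [^]\<^bsub>PGL2\<^esub> k"
    using X_carr pgl_carrier[OF dN] pgl_carrier[OF Ut_det[of t]]
    by (simp add: P.inv_solve_left)
  moreover have "inv\<^bsub>PGL2\<^esub> pgl_img N \<in> borel"
    using NUT by (intro subgroup.m_inv_closed[OF subgroup_borel]) (auto simp: borel_UT)
  ultimately show ?thesis by blast
qed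

lemma unip_eq: "unip = range (\<lambda>t. pgl_img (Ut t))"
proof
  show "unip \<subseteq> range (\<lambda>t. pgl_img (Ut t))"
  proof
    fix u assume "u \<in> (unip :: 'a mat2 set set)"
    then obtain d t where dt: "d \<noteq> 0" "u = pgl_img (d,t,0,d)" by (auto simp: unip_def)
    have "(d,t,0,d) = mmul (d,0,0,d) (Ut (t/d))" using dt by (simp add: Ut_def)
    then have "u = pgl_img (Ut (t/d))" using dt pgl_scal[OF dt(1) Ut_det] by simp
    then show "u \<in> range (\<lambda>t. pgl_img (Ut t))" by blast
  qed
  show "range (\<lambda>t. pgl_img (Ut t)) \<subseteq> unip"
    by (auto simp: unip_def Ut_def)
qed

lemma Ut_inj: "inj (\<lambda>t. pgl_img (Ut t))"
proof (rule injI)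
  fix t t' :: 'a assume "pgl_img (Ut t) = pgl_img (Ut t')"
  then obtain kk where "kk \<noteq> 0" "Ut t = mmul (kk,0,0,kk) (Ut t')" using pgl_eqD Ut_det by blast
  then show "t = t'" by (simp add: Ut_def)
qed

lemma card_unip: "card (unip :: 'a mat2 set set) = card (UNIV :: 'a set)"
  unfolding unip_eq using card_image[OF Ut_inj] by simp

lemma tw_Ut: "\<exists>k::nat. \<exists>s'\<in>borel. Xb \<otimes>\<^bsub>PGL2\<^esub> pgl_img (Ut t) = s' \<otimes>\<^bsub>PGL2\<^esub> Xb [^]\<^bsub>PGL2\<^esub> k
   \<and> twisted_act (singer lam mu) borel Xb (pgl_img (Ut t)) = Xb [^]\<^bsub>PGL2\<^esub> k"
proof -
  obtain k :: nat and s' where "s' \<in> borel" "Xb \<otimes>\<^bsub>PGL2\<^esub> pgl_img (Ut t) = s' \<otimes>\<^bsub>PGL2\<^esub> Xb [^]\<^bsub>PGL2\<^esub> k"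
    using exist[of t] by blast
  moreover have "Xb [^]\<^bsub>PGL2\<^esub> k \<in> singer lam mu" by (auto simp: singer_def)
  ultimately show ?thesis using twisted_eq by blast
qed

lemma key_d:
  assumes M: "M \<in> UT" and e: "pgl_img (mmul x (Ut d)) = pgl_img (mmul M x)"
  shows "d = 0"
proof -
  have dxU: "det2 (mmul x (Ut d)) \<noteq> 0" using x_carr Ut_det[of d] by (simp add: det2_mmul del: det2.simps)
  obtain kk where kk: "kk \<noteq> 0" "mmul x (Ut d) = mmul (kk,0,0,kk) (mmul M x)"
    using pgl_eqD[OF e dxU] by blast
  obtain m1 m2 m4 where m: "M = (m1,m2,0,m4)" using M by (auto simp: UT_def)
  have E: "mmul x (Ut d) = mmul (kk,0,0,kk) (mmul (m1,m2,0,m4) x)" using kk(2) m by simp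
  have e3: "fst (snd (snd (mmul x (Ut d)))) = fst (snd (snd (mmul (kk,0,0,kk) (mmul (m1,m2,0,m4) x))))"
    using E by (simp only:)
  have e4: "snd (snd (snd (mmul x (Ut d)))) = snd (snd (snd (mmul (kk,0,0,kk) (mmul (m1,m2,0,m4) x))))"
    using E by (simp only:)
  have "(kk*m4 - 1) * lam = 0" using e3 by (simp add: companion_def Ut_def algebra_simps)
  then have k1: "kk * m4 = 1" using lam_nz by simp
  have "lam * d + mu = kk*m4*mu" using e4 by (simp add: companion_def Ut_def algebra_simps)
  then have "lam * d = 0" using k1 by simp
  then show ?thesis using lam_nz by simp
qed

lemma tw_inj: "inj_on (\<lambda>u. twisted_act (singer lam mu) borel Xb u) unip"
proof -
  interpret P: group "PGL2 :: 'a mat2 set monoid" by (rule group_PGL2)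
  have bc: "s \<in> borel \<Longrightarrow> s \<in> carrier PGL2" for s using subgroup.subset[OF subgroup_borel] by auto
  have *: "t1 = t2" if eqt: "twisted_act (singer lam mu) borel Xb (pgl_img (Ut t1)) = twisted_act (singer lam mu) borel Xb (pgl_img (Ut t2))" for t1 t2
  proof -
    obtain k1 s1 where 1: "s1 \<in> borel" "Xb \<otimes>\<^bsub>PGL2\<^esub> pgl_img (Ut t1) = s1 \<otimes>\<^bsub>PGL2\<^esub> Xb [^]\<^bsub>PGL2\<^esub> (k1::nat)"
      "twisted_act (singer lam mu) borel Xb (pgl_img (Ut t1)) = Xb [^]\<^bsub>PGL2\<^esub> k1" using tw_Ut[of t1] by blast
    obtain k2 s2 where 2: "s2 \<in> borel" "Xb \<otimes>\<^bsub>PGL2\<^esub> pgl_img (Ut t2) = s2 \<otimes>\<^bsub>PGL2\<^esub> Xb [^]\<^bsub>PGL2\<^esub> (k2::nat)"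
      "twisted_act (singer lam mu) borel Xb (pgl_img (Ut t2)) = Xb [^]\<^bsub>PGL2\<^esub> k2" using tw_Ut[of t2] by blast
    define c where "c = Xb [^]\<^bsub>PGL2\<^esub> k1"
    have cc: "c \<in> carrier PGL2" using X_carr by (simp add: c_def)
    have c2: "Xb [^]\<^bsub>PGL2\<^esub> k2 = c" using eqt 1(3) 2(3) by (simp add: c_def)
    define P where "P = pgl_img (Ut (t1 - t2))"
    have u2c: "pgl_img (Ut t2) \<in> carrier PGL2" by (rule pgl_carrier[OF Ut_det])
    have Pc: "P \<in> carrier PGL2" unfolding P_def by (rule pgl_carrier[OF Ut_det])
    have u1: "pgl_img (Ut t1) = P \<otimes>\<^bsub>PGL2\<^esub> pgl_img (Ut t2)"
      unfolding P_def using pgl_mult[OF Ut_det Ut_det, of "t1 - t2" t2] by (simp add: Ut_def)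
    have s1c: "s1 \<in> carrier PGL2" and s2c: "s2 \<in> carrier PGL2" using 1(1) 2(1) bc by auto
    have "c = inv\<^bsub>PGL2\<^esub> s2 \<otimes>\<^bsub>PGL2\<^esub> (Xb \<otimes>\<^bsub>PGL2\<^esub> pgl_img (Ut t2))"
      using 2(2) c2 s2c cc X_carr u2c by (simp add: P.inv_solve_left)
    then have "(Xb \<otimes>\<^bsub>PGL2\<^esub> P) \<otimes>\<^bsub>PGL2\<^esub> pgl_img (Ut t2) = ((s1 \<otimes>\<^bsub>PGL2\<^esub> inv\<^bsub>PGL2\<^esub> s2) \<otimes>\<^bsub>PGL2\<^esub> Xb) \<otimes>\<^bsub>PGL2\<^esub> pgl_img (Ut t2)"
      using 1(2) u1 s1c s2c cc X_carr u2c Pc by (simp add: P.m_assoc c_def)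
    then have e: "Xb \<otimes>\<^bsub>PGL2\<^esub> P = (s1 \<otimes>\<^bsub>PGL2\<^esub> inv\<^bsub>PGL2\<^esub> s2) \<otimes>\<^bsub>PGL2\<^esub> Xb"
      using s1c s2c X_carr u2c Pc by simp
    have "s1 \<otimes>\<^bsub>PGL2\<^esub> inv\<^bsub>PGL2\<^esub> s2 \<in> borel"
      by (intro subgroup.m_closed[OF subgroup_borel] subgroup.m_inv_closed[OF subgroup_borel] 1(1) 2(1))
    then obtain M where M: "M \<in> UT" "s1 \<otimes>\<^bsub>PGL2\<^esub> inv\<^bsub>PGL2\<^esub> s2 = pgl_img M" by (auto simp: borel_UT)
    have "pgl_img (mmul x (Ut (t1 - t2))) = pgl_img (mmul M x)"
      using e M(2) pgl_mult[OF _ Ut_det, of x "t1 - t2"] pgl_mult[OF UT_det[OF M(1)], of x] x_carr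
      by (simp add: P_def)
    then have "t1 - t2 = 0" by (rule key_d[OF M(1)])
    then show ?thesis by simp
  qed
  show ?thesis unfolding unip_eq inj_on_def using * by auto
qed

lemma transitive:
  assumes c1: "c1 \<in> singer lam mu - {\<one>\<^bsub>PGL2\<^esub>}" and c2: "c2 \<in> singer lam mu - {\<one>\<^bsub>PGL2\<^esub>}"
  shows "\<exists>s \<in> borel. twisted_act (singer lam mu) borel c1 s = c2"
proof -
  have ll: "det2 (x [^]\<^bsub>GL2\<^esub> i) \<noteq> 0 \<and> (case x [^]\<^bsub>GL2\<^esub> i of (a,b,c,d) \<Rightarrow> c) \<noteq> 0"
    if "pgl_img (x [^]\<^bsub>GL2\<^esub> (i::nat)) \<noteq> \<one>\<^bsub>PGL2\<^esub>" for i
  proof -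
    obtain a b where ab: "x [^]\<^bsub>GL2\<^esub> i = phi lam mu a b" "(a,b) \<noteq> (0,0)"
      using pow_in[of i] by auto
    have "b \<noteq> 0"
    proof
      assume b: "b = 0"
      then have "a \<noteq> 0" using ab by simp
      then show False using that ab b pgl_scalar_one[of a] by (simp add: phi_def)
    qed
    then show ?thesis using ab xpow_det[of i] lam_nz by (simp add: phi_def)
  qed
  obtain i j where ij: "c1 = pgl_img (x [^]\<^bsub>GL2\<^esub> (i::nat))" "c2 = pgl_img (x [^]\<^bsub>GL2\<^esub> (j::nat))"
    using c1 c2 by (auto simp: singer_def X_pow)
  obtain A B where AB: "A \<in> UT" "B \<in> UT" "mmul (x [^]\<^bsub>GL2\<^esub> i) B = mmul A (x [^]\<^bsub>GL2\<^esub> j)"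
  proof -
    have n1: "pgl_img (x [^]\<^bsub>GL2\<^esub> i) \<noteq> \<one>\<^bsub>PGL2\<^esub>" using c1 ij by simp
    have n2: "pgl_img (x [^]\<^bsub>GL2\<^esub> j) \<noteq> \<one>\<^bsub>PGL2\<^esub>" using c2 ij by simp
    show ?thesis using that bruhat[of "x [^]\<^bsub>GL2\<^esub> i" "x [^]\<^bsub>GL2\<^esub> j"] ll[OF n1] ll[OF n2] by blast
  qed
  have "c1 \<otimes>\<^bsub>PGL2\<^esub> pgl_img B = pgl_img A \<otimes>\<^bsub>PGL2\<^esub> c2"
    using AB pgl_mult[OF xpow_det UT_det[OF AB(2)], of i] pgl_mult[OF UT_det[OF AB(1)] xpow_det, of j] ij
    by simp
  moreover have "pgl_img A \<in> borel" "pgl_img B \<in> borel" using AB by (auto simp: borel_UT)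
  ultimately show ?thesis using twisted_eq c2 by blast
qed

end

theorem mainTheorem3:
  fixes lam mu :: "'a::{finite,field}"
  assumes "primitive_poly [:lam, mu, 1:]"
  shows "card (unip :: 'a mat2 set set) = card (UNIV :: 'a set)
    \<and> inj_on (\<lambda>u. twisted_act (singer lam mu) borel (pgl_img (companion lam mu)) u) unip
    \<and> (\<forall>c1 \<in> singer lam mu - {\<one>\<^bsub>PGL2\<^esub>}. \<forall>c2 \<in> singer lam mu - {\<one>\<^bsub>PGL2\<^esub>}.
         \<exists>s \<in> borel. twisted_act (singer lam mu) borel c1 s = c2)"
proof -
  interpret prim lam mu by (unfold_locales) (rule assms)
  show ?thesis using card_unip tw_inj transitive by blast
qed


end
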